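(* Let $\mathcal{P}$ satisfy properties (a)–(f). For every ordering $e_1,\ldots,e_N$ of the edges of $K_n$ and every $t\in[N]$, $R(t)\le \mathrm{ex}(G(n,t))$.
   Context: All graphs are vertex-labelled, simple and undirected. Let $\mathcal{P}$ be a class of graphs such that: (a) $\mathcal{P}$ is not the class of all graphs; (b) it contains all edgeless graphs; (c) it is closed under isomorphism; (d) it is closed under taking minors; (e) it is weakly addable, i.e. if $G\in\mathcal{P}$ and $u,v$ lie in different components of $G$ then $G+uv\in\mathcal{P}$; (f) if $G\in\mathcal{P}$ and $u,v$ are non-adjacent vertices in the same component of $G$ which is a tree, then $G+uv\in\mathcal{P}$. Let $N=\binom{n}{2}$. Given an ordering $e_1,\ldots,e_N$ of the edges of $K_n$: $P(n,0)$ is the empty graph on $[n]$; for $t\in[N]$, $P(n,t)=P(n,t-1)+e_t$ if $P(n,t-1)+e_t\in\mathcal{P}$ ($e_t$ accepted), and $P(n,t)=P(n,t-1)$ otherwise ($e_t$ rejected). $R(t):=t-e(P(n,t))$ where $e(H)$ is the number of edges. $G(n,t)$ is the graph on $[n]$ with edge set $\{e_1,\ldots,e_t\}$. The excess of a graph $H$ is $\mathrm{ex}(H):=e(H)-|V(H)|+\kappa(H)$, where $\kappa(H)$ is the number of tree components of $H$. *)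

theory Defs
  imports Main
begin

type_synonym graph = "nat set \<times> nat set set"

definition verts :: "graph \<Rightarrow> nat set" where "verts G = fst G"
definition edges :: "graph \<Rightarrow> nat set set" where "edges G = snd G"

definition wf_graph :: "graph \<Rightarrow> bool" where
  "wf_graph G \<longleftrightarrow> finite (verts G) \<and>
     (\<forall>e\<in>edges G. \<exists>u v. e = {u, v} \<and> u \<noteq> v \<and> u \<in> verts G \<and> v \<in> verts G)"

definition all_graphs :: "graph set" where "all_graphs = {G. wf_graph G}"

definition adj_in :: "graph \<Rightarrow> nat set \<Rightarrow> (nat \<times> nat) set" where
  "adj_in G S = {(x, y). x \<in> S \<and> y \<in> S \<and> {x, y} \<in> edges G}"

definition connected_set :: "graph \<Rightarrow> nat set \<Rightarrow> bool" where
  "connected_set G S \<longleftrightarrow> S \<noteq> {} \<and> (\<forall>x\<in>S. \<forall>y\<in>S. (x, y) \<in> (adj_in G S)\<^sup>*)"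

text \<open>H is a minor of G (up to isomorphism): model of H via disjoint connected branch sets.\<close>
definition is_minor :: "graph \<Rightarrow> graph \<Rightarrow> bool" where
  "is_minor H G \<longleftrightarrow> (\<exists>f :: nat \<Rightarrow> nat set.
      (\<forall>h\<in>verts H. f h \<subseteq> verts G \<and> connected_set G (f h)) \<and>
      (\<forall>h\<in>verts H. \<forall>h'\<in>verts H. h \<noteq> h' \<longrightarrow> f h \<inter> f h' = {}) \<and>
      (\<forall>h\<in>verts H. \<forall>h'\<in>verts H. {h, h'} \<in> edges H \<longrightarrow>
          (\<exists>u\<in>f h. \<exists>v\<in>f h'. {u, v} \<in> edges G)))"

definition same_comp :: "graph \<Rightarrow> nat \<Rightarrow> nat \<Rightarrow> bool" where
  "same_comp G u v \<longleftrightarrow> u \<in> verts G \<and> v \<in> verts G \<and> (u, v) \<in> (adj_in G (verts G))\<^sup>*"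

definition comp_of :: "graph \<Rightarrow> nat \<Rightarrow> nat set" where
  "comp_of G v = {w. same_comp G v w}"

definition components :: "graph \<Rightarrow> nat set set" where
  "components G = comp_of G ` verts G"

text \<open>A component C (connected) is a tree iff it has exactly |C| - 1 edges.\<close>
definition is_tree_comp :: "graph \<Rightarrow> nat set \<Rightarrow> bool" where
  "is_tree_comp G C \<longleftrightarrow> card {e\<in>edges G. e \<subseteq> C} + 1 = card C"

definition num_tree_comps :: "graph \<Rightarrow> nat" where
  "num_tree_comps G = card {C\<in>components G. is_tree_comp G C}"

definition excess :: "graph \<Rightarrow> int" where
  "excess G = int (card (edges G)) - int (card (verts G)) + int (num_tree_comps G)"

definition add_edge :: "graph \<Rightarrow> nat \<Rightarrow> nat \<Rightarrow> graph" where
  "add_edge G u v = (verts G, insert {u, v} (edges G))"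

definition good_class :: "graph set \<Rightarrow> bool" where
  "good_class P \<longleftrightarrow>
     P \<subseteq> all_graphs \<and>
     P \<noteq> all_graphs \<and>
     (\<forall>V. finite V \<longrightarrow> (V, {}) \<in> P) \<and>
     (\<forall>G\<in>P. \<forall>f V'. bij_betw f (verts G) V' \<longrightarrow> (V', (\<lambda>e. f ` e) ` edges G) \<in> P) \<and>
     (\<forall>G\<in>P. \<forall>H. wf_graph H \<and> is_minor H G \<longrightarrow> H \<in> P) \<and>
     (\<forall>G\<in>P. \<forall>u\<in>verts G. \<forall>v\<in>verts G. \<not> same_comp G u v \<longrightarrow> add_edge G u v \<in> P) \<and>
     (\<forall>G\<in>P. \<forall>u\<in>verts G. \<forall>v\<in>verts G. u \<noteq> v \<and> {u, v} \<notin> edges G \<and> same_comp G u v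
          \<and> is_tree_comp G (comp_of G u) \<longrightarrow> add_edge G u v \<in> P)"

definition Kn_edges :: "nat \<Rightarrow> nat set set" where
  "Kn_edges n = {e. \<exists>u v. e = {u, v} \<and> u \<noteq> v \<and> u \<in> {1..n} \<and> v \<in> {1..n}}"

text \<open>An ordering e_1..e_N of the edges of K_n is a list es with es ! (t-1) = e_t.
  proc_edges P n es t is the edge set of P(n,t).\<close>
primrec proc_edges :: "graph set \<Rightarrow> nat \<Rightarrow> nat set list \<Rightarrow> nat \<Rightarrow> nat set set" where
  "proc_edges P n es 0 = {}"
| "proc_edges P n es (Suc t) =
     (if ({1..n}, insert (es ! t) (proc_edges P n es t)) \<in> P
      then insert (es ! t) (proc_edges P n es t)
      else proc_edges P n es t)"

definition R_rej :: "graph set \<Rightarrow> nat \<Rightarrow> nat set list \<Rightarrow> nat \<Rightarrow> int" where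
  "R_rej P n es t = int t - int (card (proc_edges P n es t))"

definition Gnt :: "nat \<Rightarrow> nat set list \<Rightarrow> nat \<Rightarrow> graph" where
  "Gnt n es t = ({1..n}, set (take t es))"

end

theory Submission
  imports Defs
begin

lemma span_count:
  fixes R :: "(nat \<times> nat) set" and E :: "nat set set" and C D :: "nat set"
  assumes RE: "\<And>x y. (x,y) \<in> R \<Longrightarrow> {x,y} \<in> E"
    and reach: "\<And>x. x \<in> C \<Longrightarrow> \<exists>d\<in>D. (x,d) \<in> R\<^sup>*"
    and clos: "\<And>x y. x \<in> C \<Longrightarrow> (x,y) \<in> R \<Longrightarrow> y \<in> C"
    and DC: "D \<subseteq> C" and fC: "finite C" and fE: "finite E"
  shows "card {e\<in>E. e \<subseteq> D} + card (C - D) \<le> card {e\<in>E. e \<subseteq> C}"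
proof -
  define dist where "dist x = (LEAST k. \<exists>d\<in>D. (x,d) \<in> R ^^ k)" for x
  have dist_ex: "\<exists>d\<in>D. (x,d) \<in> R ^^ dist x" if "x \<in> C" for x
  proof -
    from reach[OF that] have "\<exists>k. \<exists>d\<in>D. (x,d) \<in> R^^k" using rtrancl_power by blast
    then show ?thesis unfolding dist_def by (rule LeastI_ex)
  qed
  have dist_le: "dist x \<le> k" if "\<exists>d\<in>D. (x,d) \<in> R^^k" for x k
    unfolding dist_def using that by (rule Least_le)
  have par: "\<exists>y. (x,y) \<in> R \<and> y \<in> C \<and> dist y < dist x" if xCD: "x \<in> C - D" for x
  proof -
    obtain d where d: "d\<in>D" "(x,d) \<in> R^^dist x" using dist_ex xCD by auto
    have "dist x \<noteq> 0"
    proof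
      assume "dist x = 0" then show False using d xCD by auto
    qed
    then obtain m where m: "dist x = Suc m" by (cases "dist x") auto
    from d m obtain y where y: "(x,y) \<in> R" "(y,d) \<in> R^^m" using relpow_Suc_D2 by metis
    have "dist y \<le> m" using dist_le y d by blast
    then show ?thesis using y m clos xCD by auto
  qed
  then obtain p where p: "\<And>x. x \<in> C - D \<Longrightarrow> (x, p x) \<in> R \<and> p x \<in> C \<and> dist (p x) < dist x"
    by metis
  define f where "f x = {x, p x}" for x
  have inj: "inj_on f (C-D)"
  proof (rule inj_onI)
    fix x y assume xy: "x \<in> C - D" "y \<in> C - D" "f x = f y"
    show "x = y"
    proof (rule ccontr)
      assume "x \<noteq> y"
      then have e: "x = p y \<and> y = p x" using xy(3) unfolding f_def by (auto simp: doubleton_eq_iff)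
      have a: "p y = x" "p x = y" using e[THEN conjunct1, symmetric] e[THEN conjunct2, symmetric] by this+
      have b1: "dist (p x) < dist x" using p[OF xy(1)] by blast
      have b2: "dist (p y) < dist y" using p[OF xy(2)] by blast
      have "dist y < dist x" using b1 a(2) by simp
      moreover have "dist x < dist y" using b2 a(1) by simp
      ultimately show False by simp
    qed
  qed
  have img: "f ` (C-D) \<subseteq> {e\<in>E. e \<subseteq> C}"
  proof
    fix e assume "e \<in> f ` (C-D)"
    then obtain x where x: "x \<in> C - D" "e = {x, p x}" unfolding f_def by blast
    have "(x, p x) \<in> R" "p x \<in> C" using p[OF x(1)] by blast+
    then show "e \<in> {e\<in>E. e \<subseteq> C}" using RE x by auto
  qed
  have disj: "{e\<in>E. e \<subseteq> D} \<inter> f ` (C-D) = {}" unfolding f_def by auto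
  have "card {e\<in>E. e \<subseteq> D} + card (C - D) = card {e\<in>E. e \<subseteq> D} + card (f ` (C-D))"
    using card_image[OF inj] by simp
  also have "\<dots> = card ({e\<in>E. e \<subseteq> D} \<union> f ` (C-D))"
    using disj fE fC by (intro card_Un_disjoint[symmetric]) auto
  also have "\<dots> \<le> card {e\<in>E. e \<subseteq> C}"
    using img DC fE by (intro card_mono) auto
  finally show ?thesis .
qed

lemma adj_mono: "E \<subseteq> E' \<Longrightarrow> adj_in (V,E) S \<subseteq> adj_in (V',E') S"
  unfolding adj_in_def edges_def by auto

lemma adj_sym: "sym (adj_in G S)"
  unfolding sym_def adj_in_def by (auto simp: insert_commute)

lemma rt_sym: "(x,y) \<in> (adj_in G S)\<^sup>* \<Longrightarrow> (y,x) \<in> (adj_in G S)\<^sup>*"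
  using sym_rtrancl[OF adj_sym] unfolding sym_def by blast

lemma comp_mem: "w \<in> comp_of G r \<longleftrightarrow> r \<in> verts G \<and> w \<in> verts G \<and> (r,w) \<in> (adj_in G (verts G))\<^sup>*"
  by (simp add: comp_of_def same_comp_def)

lemma comp_clos: "x \<in> comp_of G r \<Longrightarrow> (x,y) \<in> adj_in G (verts G) \<Longrightarrow> y \<in> comp_of G r"
  unfolding comp_mem by (auto simp: adj_in_def intro: rtrancl_into_rtrancl)

lemma comp_eq: "w \<in> comp_of G r \<Longrightarrow> comp_of G w = comp_of G r"
proof -
  assume w: "w \<in> comp_of G r"
  then have rw: "r \<in> verts G" "w \<in> verts G" "(r,w) \<in> (adj_in G (verts G))\<^sup>*" by (auto simp: comp_mem)
  have wr: "(w,r) \<in> (adj_in G (verts G))\<^sup>*" using rt_sym rw(3) by blast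
  show ?thesis
  proof (rule set_eqI)
    fix z show "z \<in> comp_of G w \<longleftrightarrow> z \<in> comp_of G r"
      unfolding comp_mem using rw wr by (meson rtrancl_trans)
  qed
qed

lemma tree_bound:
  assumes "finite (verts G)" "finite (edges G)" "r \<in> verts G"
  shows "card (comp_of G r) \<le> card {e\<in>edges G. e \<subseteq> comp_of G r} + 1"
proof -
  let ?C = "comp_of G r"
  have rC: "r \<in> ?C" using assms(3) by (simp add: comp_mem)
  have fC: "finite ?C" using assms(1) by (rule finite_subset[rotated]) (auto simp: comp_mem)
  have "card {e\<in>edges G. e \<subseteq> {r}} + card (?C - {r}) \<le> card {e\<in>edges G. e \<subseteq> ?C}"
  proof (rule span_count[where R="adj_in G (verts G)"])
    show "\<And>x y. (x, y) \<in> adj_in G (verts G) \<Longrightarrow> {x, y} \<in> edges G" by (auto simp: adj_in_def)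
    show "\<And>x. x \<in> ?C \<Longrightarrow> \<exists>d\<in>{r}. (x, d) \<in> (adj_in G (verts G))\<^sup>*"
      using rt_sym by (auto simp: comp_mem)
    show "\<And>x y. x \<in> ?C \<Longrightarrow> (x, y) \<in> adj_in G (verts G) \<Longrightarrow> y \<in> ?C" by (rule comp_clos)
  qed (use rC fC assms in auto)
  moreover have "card (?C - {r}) = card ?C - 1" using rC fC by simp
  ultimately show ?thesis by linarith
qed

lemma proc_mono: "s \<le> s' \<Longrightarrow> proc_edges P n es s \<subseteq> proc_edges P n es s'"
  by (rule lift_Suc_mono_le[of "proc_edges P n es"]) auto

lemma proc_sub: "s \<le> length es \<Longrightarrow> proc_edges P n es s \<subseteq> set (take s es)"
proof (induction s)
  case 0 then show ?case by simp
next
  case (Suc s)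
  then have "proc_edges P n es (Suc s) \<subseteq> insert (es ! s) (set (take s es))" by auto
  then show ?case using Suc.prems by (simp add: take_Suc_conv_app_nth)
qed

lemma proc_P: "good_class P \<Longrightarrow> ({1..n}, proc_edges P n es s) \<in> P"
proof (induction s)
  case 0 then show ?case by (simp add: good_class_def)
next
  case (Suc s) then show ?case by auto
qed

lemma nth_notin_take: "distinct es \<Longrightarrow> s < length es \<Longrightarrow> es ! s \<notin> set (take s es)"
proof
  assume d: "distinct es" and s: "s < length es" and "es ! s \<in> set (take s es)"
  then obtain j where j: "j < length (take s es)" "take s es ! j = es ! s" by (auto simp: in_set_conv_nth)
  then have "j < s" "es ! j = es ! s" by auto
  then show False using d s nth_eq_iff_index_eq by fastforce
qed

lemma gc_e: "good_class P \<Longrightarrow> G \<in> P \<Longrightarrow> u \<in> verts G \<Longrightarrow> v \<in> verts G \<Longrightarrow> \<not> same_comp G u v \<Longrightarrow> add_edge G u v \<in> P"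
  unfolding good_class_def by blast

lemma gc_f: "good_class P \<Longrightarrow> G \<in> P \<Longrightarrow> u \<in> verts G \<Longrightarrow> v \<in> verts G \<Longrightarrow> u \<noteq> v \<Longrightarrow> {u, v} \<notin> edges G \<Longrightarrow> same_comp G u v
          \<Longrightarrow> is_tree_comp G (comp_of G u) \<Longrightarrow> add_edge G u v \<in> P"
  unfolding good_class_def by blast

lemma reject:
  assumes g: "good_class P" and d: "distinct es" and k: "set es = Kn_edges n" and s: "s < length es"
    and nin: "es ! s \<notin> proc_edges P n es (Suc s)"
  shows "\<exists>u v. es ! s = {u,v} \<and> u \<in> {1..n} \<and> same_comp ({1..n}, proc_edges P n es s) u v
     \<and> \<not> is_tree_comp ({1..n}, proc_edges P n es s) (comp_of ({1..n}, proc_edges P n es s) u)"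
proof -
  let ?G = "({1..n}, proc_edges P n es s)"
  have "es ! s \<in> Kn_edges n" using k s nth_mem by blast
  then obtain u v where uv: "es ! s = {u,v}" "u \<noteq> v" "u \<in> {1..n}" "v \<in> {1..n}"
    by (auto simp: Kn_edges_def)
  have notP: "add_edge ?G u v \<notin> P" using nin uv(1)
    by (auto simp: add_edge_def verts_def edges_def split: if_splits)
  have GP: "?G \<in> P" using proc_P[OF g] .
  have notE: "{u,v} \<notin> edges ?G"
    using nth_notin_take[OF d s] proc_sub[of s es P n] s uv(1) by (auto simp: edges_def)
  have vG: "verts ?G = {1..n}" by (simp add: verts_def)
  have sc: "same_comp ?G u v"
    using gc_e[OF g GP, of u v] notP uv vG by auto
  have "\<not> is_tree_comp ?G (comp_of ?G u)"
    using gc_f[OF g GP, of u v] notP uv vG notE sc by auto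
  then show ?thesis using uv sc by blast
qed

theorem mainTheorem6:
  fixes P :: "graph set" and n :: nat and es :: "nat set list" and t :: nat
  assumes "good_class P"
    and "distinct es" and "set es = Kn_edges n"
    and "t \<in> {1..length es}"
  shows "R_rej P n es t \<le> excess (Gnt n es t)"
proof -
  note g = assms(1) and d = assms(2) and k = assms(3)
  have tle: "t \<le> length es" using assms(4) by auto
  define V where "V = {1..n}"
  define A where "A = proc_edges P n es t"
  define B where "B = set (take t es)"
  define GA where "GA = (V, A)"
  define GB where "GB = (V, B)"
  define R where "R = adj_in GA V"
  have vGA: "verts GA = V" "edges GA = A" by (simp_all add: GA_def verts_def edges_def)
  have vGB: "verts GB = V" "edges GB = B" by (simp_all add: GB_def verts_def edges_def)
  have GBeq: "Gnt n es t = GB" by (simp add: Gnt_def GB_def V_def B_def)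
  have AB: "A \<subseteq> B" using proc_sub[OF tle] by (simp add: A_def B_def)
  have cardB: "card B = t" using d tle by (simp add: B_def distinct_card)
  have finB: "finite B" by (simp add: B_def)
  have finA: "finite A" using AB finB finite_subset by blast
  have finV: "finite V" by (simp add: V_def)
  have BK: "B \<subseteq> Kn_edges n" using k by (auto simp: B_def dest: in_set_takeD)
  have rej: "\<exists>s<t. e = es ! s \<and> es ! s \<notin> proc_edges P n es (Suc s)" if "e \<in> B - A" for e
  proof -
    from that obtain s where s: "s < t" "e = es ! s"
      using tle by (auto simp: B_def in_set_conv_nth)
    have "proc_edges P n es (Suc s) \<subseteq> A" unfolding A_def using s by (intro proc_mono) simp
    then show ?thesis using s that by blast
  qed
  have rej2: "\<exists>s u v. s < t \<and> e = {u,v} \<and> u \<in> V \<and> same_comp (V, proc_edges P n es s) u v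
     \<and> \<not> is_tree_comp (V, proc_edges P n es s) (comp_of (V, proc_edges P n es s) u)" if eBA: "e \<in> B - A" for e
  proof -
    obtain s where s: "s < t" "e = es ! s" "es ! s \<notin> proc_edges P n es (Suc s)" using rej[OF eBA] by blast
    show ?thesis using reject[OF g d k _ s(3)] s tle unfolding V_def by fastforce
  qed
  have sub_s: "(adj_in (V, proc_edges P n es s) V)\<^sup>* \<subseteq> R\<^sup>*" if "s \<le> t" for s
    unfolding R_def GA_def A_def using proc_mono[OF that] by (intro rtrancl_mono adj_mono)
  have reach: "(adj_in GB V)\<^sup>* = R\<^sup>*"
  proof
    show "R\<^sup>* \<subseteq> (adj_in GB V)\<^sup>*" unfolding R_def GA_def GB_def using AB by (intro rtrancl_mono adj_mono)
    show "(adj_in GB V)\<^sup>* \<subseteq> R\<^sup>*"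
    proof (rule rtrancl_subset_rtrancl, safe)
      fix x y assume xy: "(x,y) \<in> adj_in GB V"
      then have xyV: "x \<in> V" "y \<in> V" "{x,y} \<in> B" by (auto simp: adj_in_def vGB)
      show "(x,y) \<in> R\<^sup>*"
      proof (cases "{x,y} \<in> A")
        case True then show ?thesis using xyV by (auto simp: R_def adj_in_def vGA)
      next
        case False
        then obtain s u v where suv: "s < t" "{x,y} = {u,v}" "same_comp (V, proc_edges P n es s) u v"
          using rej2[of "{x,y}"] xyV by blast
        have "(u,v) \<in> R\<^sup>*" using suv(3) sub_s[of s] suv(1) by (auto simp: same_comp_def verts_def)
        then show ?thesis using suv(2) rt_sym[of u v GA V] unfolding R_def by (auto simp: doubleton_eq_iff)
      qed
    qed
  qed
  have compeq: "comp_of GB x = comp_of GA x" for x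
    unfolding comp_of_def same_comp_def using reach vGA vGB by (simp add: R_def)
  define comps where "comps = components GB"
  have comps_eq: "comps = comp_of GA ` V" by (simp add: comps_def components_def vGB compeq)
  have finComps: "finite comps" using comps_eq finV by simp
  have compV: "C \<subseteq> V" if "C \<in> comps" for C using that comps_eq by (auto simp: comp_mem vGA)
  have finC: "finite C" if "C \<in> comps" for C using compV[OF that] finV finite_subset by blast
  have disj: "C1 = C2" if "C1 \<in> comps" "C2 \<in> comps" "z \<in> C1" "z \<in> C2" for C1 C2 z
    using that comps_eq comp_eq by (metis imageE)
  have key: "card C \<le> card {e\<in>A. e \<subseteq> C} + (if is_tree_comp GB C then 1 else 0)" if Cc: "C \<in> comps" for C
  proof -
    obtain r where r: "r \<in> V" "C = comp_of GA r" using Cc comps_eq by blast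
    have tb: "card C \<le> card {e\<in>A. e \<subseteq> C} + 1" using tree_bound[of GA r] r finV finA vGA by simp
    show ?thesis
    proof (cases "is_tree_comp GB C")
      case True then show ?thesis using tb by simp
    next
      case nt: False
      show ?thesis
      proof (cases "{e\<in>B. e \<subseteq> C} = {e\<in>A. e \<subseteq> C}")
        case True
        then have "card {e\<in>A. e \<subseteq> C} + 1 \<noteq> card C" using nt by (simp add: is_tree_comp_def vGB)
        then show ?thesis using tb nt by simp
      next
        case False
        then obtain e where e: "e \<in> B - A" "e \<subseteq> C" using AB by blast
        obtain s u v where suv: "s < t" "e = {u,v}" "u \<in> V" "same_comp (V, proc_edges P n es s) u v"
          "\<not> is_tree_comp (V, proc_edges P n es s) (comp_of (V, proc_edges P n es s) u)"
          using rej2[OF e(1)] by blast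
        define Gs where "Gs = (V, proc_edges P n es s)"
        define D where "D = comp_of Gs u"
        have vGs: "verts Gs = V" "edges Gs = proc_edges P n es s" by (simp_all add: Gs_def verts_def edges_def)
        have As: "proc_edges P n es s \<subseteq> A" unfolding A_def using suv(1) by (intro proc_mono) simp
        have finAs: "finite (proc_edges P n es s)" using As finA finite_subset by blast
        have tbD: "card D \<le> card {e\<in>proc_edges P n es s. e \<subseteq> D} + 1"
          using tree_bound[of Gs u] finV finAs suv(3) vGs by (simp add: D_def)
        have ntD: "card {e\<in>proc_edges P n es s. e \<subseteq> D} + 1 \<noteq> card D"
          using suv(5) by (simp add: is_tree_comp_def Gs_def[symmetric] D_def vGs)
        have "card {e\<in>proc_edges P n es s. e \<subseteq> D} \<le> card {e\<in>A. e \<subseteq> D}"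
          using As finA by (intro card_mono) auto
        then have cD: "card D \<le> card {e\<in>A. e \<subseteq> D}" using tbD ntD by linarith
        have uC: "u \<in> C" using e suv(2) by auto
        have ru: "(r,u) \<in> R\<^sup>*" using uC r by (simp add: comp_mem vGA R_def)
        have uD: "u \<in> D" using suv(3) by (simp add: D_def comp_mem vGs)
        have DC: "D \<subseteq> C"
        proof
          fix w assume "w \<in> D"
          then have "(u,w) \<in> (adj_in Gs V)\<^sup>*" "w \<in> V" by (simp_all add: D_def comp_mem vGs)
          then have "(u,w) \<in> R\<^sup>*" "w \<in> V" using sub_s[of s] suv(1) by (auto simp: Gs_def)
          then show "w \<in> C" using ru r by (simp add: comp_mem vGA R_def)
        qed
        have "card {e\<in>A. e \<subseteq> D} + card (C - D) \<le> card {e\<in>A. e \<subseteq> C}"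
        proof (rule span_count[where R=R])
          show "\<And>x y. (x, y) \<in> R \<Longrightarrow> {x, y} \<in> A" by (auto simp: R_def adj_in_def vGA)
          show "\<exists>d\<in>D. (x, d) \<in> R\<^sup>*" if "x \<in> C" for x
          proof -
            have "(r,x) \<in> R\<^sup>*" using that r by (simp add: comp_mem vGA R_def)
            then have "(x,r) \<in> R\<^sup>*" unfolding R_def by (rule rt_sym)
            then show ?thesis using ru uD by (meson rtrancl_trans)
          qed
          show "\<And>x y. x \<in> C \<Longrightarrow> (x, y) \<in> R \<Longrightarrow> y \<in> C"
            using r comp_clos[of _ GA r] by (simp add: R_def vGA)
        qed (use DC finC[OF Cc] finA in auto)
        moreover have "card C = card D + card (C - D)"
          using DC finC[OF Cc] by (metis card_Diff_subset card_mono finite_subset le_add_diff_inverse)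
        ultimately show ?thesis using cD by simp
      qed
    qed
  qed
  have sumV: "card V = (\<Sum>C\<in>comps. card C)"
  proof -
    have "\<Union>comps = V"
    proof
      show "\<Union>comps \<subseteq> V" using compV by blast
      show "V \<subseteq> \<Union>comps"
      proof
        fix x assume "x \<in> V"
        then have "x \<in> comp_of GA x" by (simp add: comp_mem vGA)
        then show "x \<in> \<Union>comps" using comps_eq \<open>x \<in> V\<close> by blast
      qed
    qed
    moreover have "pairwise disjnt comps"
      unfolding pairwise_def disjnt_def using disj by blast
    ultimately show ?thesis using card_Union_disjoint[of comps] finC by simp
  qed
  have sumA: "card A = (\<Sum>C\<in>comps. card {e\<in>A. e \<subseteq> C})"
  proof -
    have "(\<Union>C\<in>comps. {e\<in>A. e \<subseteq> C}) = A"
    proof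
      show "(\<Union>C\<in>comps. {e\<in>A. e \<subseteq> C}) \<subseteq> A" by blast
      show "A \<subseteq> (\<Union>C\<in>comps. {e\<in>A. e \<subseteq> C})"
      proof
        fix e assume eA: "e \<in> A"
        then obtain u v where uv: "e = {u,v}" "u \<in> V" "v \<in> V"
          using AB BK by (auto simp: Kn_edges_def V_def)
        have "(u,v) \<in> R" using eA uv by (simp add: R_def adj_in_def vGA)
        then have "v \<in> comp_of GA u" "u \<in> comp_of GA u" using uv by (auto simp: comp_mem vGA R_def)
        then show "e \<in> (\<Union>C\<in>comps. {e\<in>A. e \<subseteq> C})" using uv eA comps_eq by blast
      qed
    qed
    moreover have "card (\<Union>C\<in>comps. {e\<in>A. e \<subseteq> C}) = (\<Sum>C\<in>comps. card {e\<in>A. e \<subseteq> C})"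
    proof (rule card_UN_disjoint)
      show "finite comps" by (rule finComps)
      show "\<forall>i\<in>comps. finite {e \<in> A. e \<subseteq> i}" using finA by simp
      show "\<forall>i\<in>comps. \<forall>j\<in>comps. i \<noteq> j \<longrightarrow> {e \<in> A. e \<subseteq> i} \<inter> {e \<in> A. e \<subseteq> j} = {}"
      proof (intro ballI impI)
        fix i j assume ij: "i \<in> comps" "j \<in> comps" "i \<noteq> j"
        show "{e \<in> A. e \<subseteq> i} \<inter> {e \<in> A. e \<subseteq> j} = {}"
        proof (rule ccontr)
          assume "{e \<in> A. e \<subseteq> i} \<inter> {e \<in> A. e \<subseteq> j} \<noteq> {}"
          then obtain e where e: "e \<in> A" "e \<subseteq> i" "e \<subseteq> j" by blast
          then obtain u v where "e = {u,v}" using AB BK by (auto simp: Kn_edges_def)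
          then show False using e disj[OF ij(1) ij(2), of u] ij(3) by auto
        qed
      qed
    qed
    ultimately show ?thesis by simp
  qed
  have sumT: "num_tree_comps GB = (\<Sum>C\<in>comps. (if is_tree_comp GB C then 1 else 0))"
    unfolding num_tree_comps_def comps_def[symmetric]
    using sum.inter_filter[OF finComps, of "\<lambda>_. 1::nat" "is_tree_comp GB"] by simp
  have "card V \<le> (\<Sum>C\<in>comps. card {e\<in>A. e \<subseteq> C} + (if is_tree_comp GB C then 1 else 0))"
    unfolding sumV using key by (rule sum_mono)
  also have "\<dots> = card A + num_tree_comps GB" by (simp add: sum.distrib sumA sumT)
  finally have main: "card V \<le> card A + num_tree_comps GB" .
  have cV: "card V = n" by (simp add: V_def)
  show ?thesis unfolding R_rej_def excess_def GBeq A_def[symmetric] vGB cardB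
    using main cV by simp
qed

end
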